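(* Let $k\in\mathbb{N}$, let $G_{\pm}(x)=|1+e^{2\pi i x}\pm e^{2\pi i (k+2)x}|^2$, and for $\rho\in\mathbb{N}$ put $A(\rho)=\sum_{\mu=0}^{\rho}\binom{\rho}{\mu}^2\binom{2\rho-2\mu}{\rho-\mu}$. Let $\rho\in\mathbb{N}$ with $\rho\le k+1$ and let $\tau>0$ be real. Then, for both choices of sign, $$\int_0^{1/2}G_{\pm}^{\tau}\le \tfrac12\,9^{\tau-\rho}A(\rho)\quad\text{if }\tau>\rho,\qquad \int_0^{1/2}G_{\pm}^{\tau}\le \tfrac12\,A(\rho)^{\tau/\rho}\quad\text{if }\tau<\rho.$$
   Context: The values $A(0),\dots,A(6)$ are $1,3,15,93,639,4653,35169$. For $\rho\le k+1$ one has $\int_0^{1/2}G_\pm^\rho=\frac12A(\rho)$, and $0\le G_\pm\le 9$. *)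

theory Defs
  imports "HOL-Analysis.Analysis"
begin

definition Gpm :: "nat \<Rightarrow> real \<Rightarrow> real \<Rightarrow> real" where
  "Gpm k s x = (cmod (1 + cis (2 * pi * x) + complex_of_real s * cis (2 * pi * real (k + 2) * x)))\<^sup>2"

definition A :: "nat \<Rightarrow> nat" where
  "A \<rho> = (\<Sum>\<mu>=0..\<rho>. (\<rho> choose \<mu>)\<^sup>2 * ((2*\<rho> - 2*\<mu>) choose (\<rho> - \<mu>)))"

end

theory Submission imports Defs begin

definition S :: "nat \<Rightarrow> (nat \<times> nat) set" where
  "S r = Sigma {..r} (\<lambda>c. {..r-c})"

definition W :: "nat \<Rightarrow> real \<Rightarrow> nat \<times> nat \<Rightarrow> real" where
  "W r s p = real (r choose fst p) * real ((r - fst p) choose snd p) * s ^ fst p"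

definition E :: "nat \<Rightarrow> nat \<times> nat \<Rightarrow> nat" where
  "E k p = snd p + (k+2) * fst p"

lemma finite_S: "finite (S r)" unfolding S_def by auto

lemma trinom:
  fixes u v :: complex
  shows "(1 + u + v)^r = (\<Sum>p\<in>S r. of_nat (r choose fst p) * of_nat ((r - fst p) choose snd p) * v ^ fst p * u ^ snd p)"
proof -
  have "(1 + u + v)^r = (v + (u + 1))^r" by (simp add: algebra_simps)
  also have "\<dots> = (\<Sum>c\<le>r. of_nat (r choose c) * v^c * (u+1)^(r-c))" by (rule binomial_ring)
  also have "\<dots> = (\<Sum>c\<le>r. \<Sum>b\<le>r-c. of_nat (r choose c) * of_nat ((r - c) choose b) * v ^ c * u ^ b)"
    by (rule sum.cong[OF refl]) (simp add: binomial_ring sum_distrib_left mult_ac)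
  finally show ?thesis unfolding S_def by (simp add: sum.Sigma case_prod_beta)
qed

lemma Qpow:
  "(1 + cis (2*pi*x) + complex_of_real s * cis (2*pi*real (k+2)*x))^r =
   (\<Sum>p\<in>S r. complex_of_real (W r s p) * cis (2*pi*real (E k p)*x))"
  unfolding trinom
proof (rule sum.cong[OF refl])
  fix p assume "p \<in> S r"
  have e1: "cis (2*pi*real (k+2)*x)^fst p = cis (real (fst p) * (2*pi*real (k+2)*x))" by (rule Complex.DeMoivre)
  have e2: "cis (2*pi*x)^snd p = cis (real (snd p) * (2*pi*x))" by (rule Complex.DeMoivre)
  have e3: "cis (real (fst p) * (2*pi*real (k+2)*x)) * cis (real (snd p) * (2*pi*x)) = cis (2*pi*real (E k p)*x)"
    by (simp add: cis_mult E_def algebra_simps)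
  have "(complex_of_real s * cis (2*pi*real (k+2)*x))^fst p * cis (2*pi*x)^snd p
       = complex_of_real (s^fst p) * cis (2*pi*real (E k p)*x)"
  proof -
    have "(complex_of_real s * cis (2*pi*real (k+2)*x))^fst p * cis (2*pi*x)^snd p
       = (complex_of_real s)^fst p * (cis (2*pi*real (k+2)*x)^fst p * cis (2*pi*x)^snd p)"
      by (simp only: power_mult_distrib mult.assoc)
    also have "\<dots> = complex_of_real (s^fst p) * cis (2*pi*real (E k p)*x)"
      by (simp only: e1 e2 e3 of_real_power)
    finally show ?thesis .
  qed
  then show "of_nat (r choose fst p) * of_nat ((r - fst p) choose snd p) *
      (complex_of_real s * cis (2*pi*real (k+2)*x))^fst p * cis (2*pi*x)^snd p =
      complex_of_real (W r s p) * cis (2*pi*real (E k p)*x)"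
    by (simp add: W_def mult.assoc)
qed

lemma Gpow:
  "Gpm k s x ^ r = (\<Sum>p\<in>S r. \<Sum>q\<in>S r. W r s p * W r s q *
        cos (2*pi*real_of_int (int (E k p) - int (E k q))*x))"
proof -
  let ?F = "(\<Sum>p\<in>S r. complex_of_real (W r s p) * cis (2*pi*real (E k p)*x))"
  have "Gpm k s x ^ r = (cmod ((1 + cis (2*pi*x) + complex_of_real s * cis (2*pi*real (k+2)*x))^r))^2"
    unfolding Gpm_def norm_power by (simp add: power_mult[symmetric] mult.commute)
  also have "\<dots> = (cmod ?F)^2" by (simp only: Qpow)
  also have "\<dots> = (\<Sum>p\<in>S r. W r s p * cos (2*pi*real (E k p)*x))^2 + (\<Sum>p\<in>S r. W r s p * sin (2*pi*real (E k p)*x))^2"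
    by (simp add: cmod_power2 Re_sum Im_sum)
  also have "\<dots> = (\<Sum>p\<in>S r. \<Sum>q\<in>S r. W r s p * W r s q *
        cos (2*pi*real_of_int (int (E k p) - int (E k q))*x))"
    by (simp add: power2_eq_square sum_product sum.distrib[symmetric] cos_diff algebra_simps)
  finally show ?thesis .
qed


lemma cos_int:
  fixes d :: int
  shows "((\<lambda>x::real. cos (2*pi* of_int d*x)) has_integral (if d = 0 then 1/2 else 0)) {0..1/2}"
proof (cases "d = 0")
  case True
  then show ?thesis using has_integral_const_real[of "1::real" 0 "1/2"] by simp
next
  case False
  have "((\<lambda>x. cos (2*pi* of_int d*x)) has_integral
      (sin (2*pi* of_int d*(1/2)) / (2*pi* of_int d) - sin (2*pi* of_int d*0) / (2*pi* of_int d))) {0..1/2}"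
  proof (rule fundamental_theorem_of_calculus)
    fix x :: real
    have "((\<lambda>x. sin (2*pi* of_int d*x) / (2*pi* of_int d)) has_real_derivative
          (cos (2*pi* of_int d*x) * (2*pi* of_int d) / (2*pi* of_int d))) (at x within {0..1/2})"
      by (auto intro!: derivative_eq_intros)
    then show "((\<lambda>x. sin (2*pi* of_int d*x) / (2*pi* of_int d)) has_vector_derivative
          cos (2*pi* of_int d*x)) (at x within {0..1/2})"
      using False by (simp add: has_real_derivative_iff_has_vector_derivative)
  qed simp
  moreover have "sin (2*pi* of_int d*(1/2)) = 0"
    using sin_times_pi_eq_0[of "of_int d"] by (simp add: mult.commute)
  ultimately show ?thesis using False by simp
qed

lemma E_inj:
  assumes "r \<le> k+1" "p \<in> S r" "q \<in> S r" "E k p = E k q"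
  shows "p = q"
proof -
  obtain c b c' b' where p: "p = (c,b)" and q: "q = (c',b')" by (cases p, cases q)
  have hb: "b \<le> k+1" "b' \<le> k+1" using assms p q unfolding S_def by auto
  have he: "b + (k+2)*c = b' + (k+2)*c'" using assms(4) p q unfolding E_def by simp
  have "c = c'"
  proof (rule ccontr)
    assume "c \<noteq> c'"
    then consider "c < c'" | "c' < c" by linarith
    then show False
    proof cases
      case 1
      then have "(k+2)*c' \<ge> (k+2)*c + (k+2)" by (metis Suc_leI add_Suc_right mult_Suc_right mult_le_mono2 add.commute)
      then show False using he hb by linarith
    next
      case 2
      then have "(k+2)*c \<ge> (k+2)*c' + (k+2)" by (metis Suc_leI add_Suc_right mult_Suc_right mult_le_mono2 add.commute)
      then show False using he hb by linarith
    qed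
  qed
  then show ?thesis using he p q by simp
qed

lemma Gpow_integral:
  assumes "r \<le> k+1"
  shows "((\<lambda>x. Gpm k s x ^ r) has_integral (\<Sum>p\<in>S r. (W r s p)^2 / 2)) {0..1/2}"
proof -
  have "((\<lambda>x. \<Sum>p\<in>S r. \<Sum>q\<in>S r. W r s p * W r s q *
        cos (2*pi*real_of_int (int (E k p) - int (E k q))*x)) has_integral
        (\<Sum>p\<in>S r. \<Sum>q\<in>S r. W r s p * W r s q * (if int (E k p) - int (E k q) = 0 then 1/2 else 0))) {0..1/2}"
    by (intro has_integral_sum finite_S has_integral_mult_right cos_int)
  moreover have "(\<Sum>p\<in>S r. \<Sum>q\<in>S r. W r s p * W r s q * (if int (E k p) - int (E k q) = 0 then 1/2 else 0))
      = (\<Sum>p\<in>S r. (W r s p)^2 / 2)"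
  proof (rule sum.cong[OF refl])
    fix p assume hp: "p \<in> S r"
    have "(\<Sum>q\<in>S r. W r s p * W r s q * (if int (E k p) - int (E k q) = 0 then 1/2 else 0))
        = (\<Sum>q\<in>S r. if p = q then W r s p * W r s q / 2 else 0)"
      using E_inj[OF assms hp] by (intro sum.cong) auto
    also have "\<dots> = (W r s p)^2 / 2" using hp finite_S by (simp add: power2_eq_square)
    finally show "(\<Sum>q\<in>S r. W r s p * W r s q * (if int (E k p) - int (E k q) = 0 then 1/2 else 0))
        = (W r s p)^2 / 2" .
  qed
  ultimately show ?thesis by (simp only: Gpow)
qed

lemma Wsum:
  assumes "s = 1 \<or> s = -1"
  shows "(\<Sum>p\<in>S r. (W r s p)^2) = real (A r)"
proof -
  have s2: "(s^c)^2 = 1" for c :: nat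
  proof -
    have "(s^c)^2 = (s^2)^c" by (metis power_mult mult.commute)
    moreover have "s^2 = 1" using assms by auto
    ultimately show ?thesis by simp
  qed
  have "(\<Sum>p\<in>S r. (W r s p)^2) = (\<Sum>c\<le>r. \<Sum>b\<le>r-c. real ((r choose c)^2) * real (((r-c) choose b)^2))"
    unfolding S_def W_def by (simp add: sum.Sigma case_prod_beta power_mult_distrib s2)
  also have "\<dots> = (\<Sum>c\<le>r. real ((r choose c)^2) * real ((2*(r-c)) choose (r-c)))"
  proof -
    have cs: "(\<Sum>b\<le>m. (real (m choose b))^2) = real ((2*m) choose m)" for m
    proof -
      have "real (\<Sum>b\<le>m. (m choose b)^2) = real ((2*m) choose m)" by (simp only: choose_square_sum)
      then show ?thesis by (simp add: of_nat_sum)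
    qed
    show ?thesis by (simp add: sum_distrib_left[symmetric] cs)
  qed
  also have "\<dots> = real (A r)"
    unfolding A_def by (simp add: atLeast0AtMost right_diff_distrib')
  finally show ?thesis .
qed


lemma G_bounds: "0 \<le> Gpm k s x" "s = 1 \<or> s = -1 \<Longrightarrow> Gpm k s x \<le> 9"
proof -
  show "0 \<le> Gpm k s x" unfolding Gpm_def by simp
  assume hs: "s = 1 \<or> s = -1"
  have "cmod (1 + cis (2 * pi * x) + complex_of_real s * cis (2 * pi * real (k + 2) * x))
     \<le> cmod (1 + cis (2 * pi * x)) + cmod (complex_of_real s * cis (2 * pi * real (k + 2) * x))"
    by (rule norm_triangle_ineq)
  also have "\<dots> \<le> (cmod 1 + cmod (cis (2 * pi * x))) + cmod (complex_of_real s * cis (2 * pi * real (k + 2) * x))"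
    by (intro add_right_mono norm_triangle_ineq)
  also have "\<dots> = 3" using hs by (auto simp: norm_mult)
  finally have "cmod (1 + cis (2 * pi * x) + complex_of_real s * cis (2 * pi * real (k + 2) * x)) \<le> 3" .
  then have "(cmod (1 + cis (2 * pi * x) + complex_of_real s * cis (2 * pi * real (k + 2) * x)))^2 \<le> 3^2"
    by (intro power_mono) auto
  then show "Gpm k s x \<le> 9" unfolding Gpm_def by simp
qed

lemma G_cont: "continuous_on T (Gpm k s)"
  unfolding Gpm_def by (intro continuous_intros)

lemma A_pos: "A r \<ge> 1"
proof -
  have "(r choose r)^2 * ((2*r - 2*r) choose (r - r)) \<le> A r"
    unfolding A_def by (rule member_le_sum) auto
  then show ?thesis by simp
qed

theorem proposition1:
  fixes k \<rho> :: nat and \<tau> s :: real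
  assumes "s = 1 \<or> s = -1"
    and "\<rho> \<le> k + 1"
    and "\<tau> > 0"
  shows "(\<tau> > real \<rho> \<longrightarrow>
           integral {0..1/2} (\<lambda>x. Gpm k s x powr \<tau>) \<le> 1/2 * 9 powr (\<tau> - real \<rho>) * real (A \<rho>))
       \<and> (\<tau> < real \<rho> \<longrightarrow>
           integral {0..1/2} (\<lambda>x. Gpm k s x powr \<tau>) \<le> 1/2 * real (A \<rho>) powr (\<tau> / real \<rho>))"
proof -
  let ?G = "Gpm k s"
  have I: "((\<lambda>x. ?G x ^ \<rho>) has_integral real (A \<rho>) / 2) {0..1/2}"
    using Gpow_integral[OF assms(2), of s] Wsum[OF assms(1), of \<rho>]
    by (simp add: sum_divide_distrib[symmetric])
  have cont: "continuous_on {0..1/2} (\<lambda>x. ?G x powr \<tau>)"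
    using assms(3) G_bounds(1)[of k s] by (intro continuous_on_powr' G_cont continuous_on_const) auto
  have J: "((\<lambda>x. ?G x powr \<tau>) has_integral integral {0..1/2} (\<lambda>x. ?G x powr \<tau>)) {0..1/2}"
    using integrable_continuous_interval[OF cont] by (simp add: integrable_integral)
  have G0: "0 \<le> ?G x" for x by (rule G_bounds(1))
  have G9: "?G x \<le> 9" for x by (rule G_bounds(2)[OF assms(1)])
  show ?thesis
  proof (intro conjI impI)
    assume h: "\<tau> > real \<rho>"
    have pw: "?G x powr \<tau> \<le> 9 powr (\<tau> - real \<rho>) * ?G x ^ \<rho>" for x
    proof (cases "?G x = 0")
      case True then show ?thesis by simp
    next
      case False
      then have gp: "?G x > 0" using G0[of x] by simp
      have "?G x powr \<tau> = ?G x powr (\<tau> - real \<rho>) * ?G x powr real \<rho>"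
        by (simp add: powr_add[symmetric])
      also have "\<dots> = ?G x powr (\<tau> - real \<rho>) * ?G x ^ \<rho>" using gp by (simp add: powr_realpow)
      also have "\<dots> \<le> 9 powr (\<tau> - real \<rho>) * ?G x ^ \<rho>"
        using h gp G9[of x] by (intro mult_right_mono powr_mono2) auto
      finally show ?thesis .
    qed
    have "integral {0..1/2} (\<lambda>x. ?G x powr \<tau>) \<le> 9 powr (\<tau> - real \<rho>) * (real (A \<rho>) / 2)"
      by (rule has_integral_le[OF J has_integral_mult_right[OF I]]) (use pw in auto)
    then show "integral {0..1/2} (\<lambda>x. ?G x powr \<tau>) \<le> 1/2 * 9 powr (\<tau> - real \<rho>) * real (A \<rho>)"
      by simp
  next
    assume h: "\<tau> < real \<rho>"
    define p where "p = \<tau> / real \<rho>"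
    define a where "a = real (A \<rho>)"
    have rpos: "real \<rho> > 0" using h assms(3) by linarith
    have p01: "0 < p" "p < 1" using h assms(3) rpos unfolding p_def by (auto simp: field_simps)
    have apos: "a > 0" unfolding a_def using A_pos[of \<rho>] by simp
    have pw: "?G x powr \<tau> \<le> a powr (p - 1) * (p * ?G x ^ \<rho> + (1 - p) * a)" for x
    proof (cases "?G x = 0")
      case True then show ?thesis using p01 apos by simp
    next
      case False
      then have gp: "?G x > 0" using G0[of x] by simp
      have e: "?G x powr \<tau> = (?G x ^ \<rho>) powr p"
        using gp rpos by (simp add: powr_realpow[symmetric] powr_powr p_def)
      have y: "(?G x ^ \<rho>) powr p * a powr (1 - p) \<le> p * ?G x ^ \<rho> + (1 - p) * a"
        using Youngs_inequality_0[of p "1 - p" "?G x ^ \<rho>" a] p01 apos gp by simp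
      have "?G x powr \<tau> = a powr (p - 1) * ((?G x ^ \<rho>) powr p * a powr (1 - p))"
        using apos by (simp add: e powr_add[symmetric] mult_ac)
      also have "\<dots> \<le> a powr (p - 1) * (p * ?G x ^ \<rho> + (1 - p) * a)"
        using y by (intro mult_left_mono) auto
      finally show ?thesis .
    qed
    have I2: "((\<lambda>x. a powr (p - 1) * (p * ?G x ^ \<rho> + (1 - p) * a)) has_integral
        a powr (p - 1) * (p * (a / 2) + (1 - p) * a * (1/2))) {0..1/2}"
    proof -
      have C: "((\<lambda>x::real. (1-p)*a) has_integral (1-p)*a*(1/2)) {0..1/2}"
        using has_integral_const_real[of "(1-p)*a" 0 "1/2"] by simp
      have I': "((\<lambda>x. ?G x ^ \<rho>) has_integral a / 2) {0..1/2}" using I unfolding a_def .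
      show ?thesis by (intro has_integral_mult_right has_integral_add C has_integral_mult_right[OF I'])
    qed
    have "integral {0..1/2} (\<lambda>x. ?G x powr \<tau>) \<le> a powr (p - 1) * (p * (a / 2) + (1 - p) * a * (1/2))"
      by (rule has_integral_le[OF J I2]) (use pw in auto)
    also have "\<dots> = 1/2 * (a powr (p - 1) * a)" by (simp add: field_simps)
    also have "\<dots> = 1/2 * a powr p"
    proof -
      have "a powr (p - 1) * a = a powr (p - 1) * a powr 1" using apos by simp
      also have "\<dots> = a powr p" by (subst powr_add[symmetric]) simp
      finally show ?thesis by simp
    qed
    finally show "integral {0..1/2} (\<lambda>x. ?G x powr \<tau>) \<le> 1/2 * real (A \<rho>) powr (\<tau> / real \<rho>)"
      unfolding a_def p_def .
  qed
qed

end
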